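(* Let $\varphi\in[0,\pi]$. Consider all post-selected linear optical implementations, using two dual-rail qubits on four signal modes, any finite number of auxiliary modes prepared in the vacuum, and photon-number-resolving detectors, of the two-qubit gate whose matrix in the computational basis $|00\rangle,|01\rangle,|10\rangle,|11\rangle$ is $U_\varphi=\mathrm{diag}(1,1,1,\mathrm{e}^{i\varphi})$. Here "implementation" means: the operator obtained from the network by restricting the input to the computational subspace, projecting the output of the signal modes onto the computational (dual-rail) subspace and projecting the auxiliary modes onto the vacuum equals $\sqrt{p_s}\,U_\varphi$ up to an overall phase, for some constant $p_s>0$ (the success probability, which is then the same for every input state). Then the maximal success probability over all such implementations is $$p_s(\varphi)=\left(1+2\left|\sin\frac{\varphi}{2}\right|+2^{3/2}\sin\frac{\pi-\varphi}{4}\sqrt{\left|\sin\frac{\varphi}{2}\right|}\right)^{-2}.$$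
   Context: Linear optics setting: a passive linear optical network on $m$ bosonic modes with creation operators $a_1^\dagger,\dots,a_m^\dagger$ is described by a unitary $m\times m$ matrix $V$, acting as $a_i^\dagger\mapsto\sum_{j} V_{j,i}a_j^\dagger$. This induces a unitary on Fock space that maps the vacuum to itself and conserves total photon number. Dual-rail encoding: qubit $k\in\{1,2\}$ is carried by two signal modes $\mathfrak{0}_k,\mathfrak{1}_k$, and the logical state $|b\rangle_k$ ($b\in\{0,1\}$) means exactly one photon in mode $\mathfrak{b}_k$ and none in the other. The computational subspace of the four signal modes is spanned by the four states with exactly one photon per qubit pair of modes. Auxiliary modes start in the vacuum; no auxiliary photons are used. After the network, all modes are measured with photon-number-resolving detectors, and the run is accepted (post-selected) only if every auxiliary mode is found in the vacuum and the signal modes are in the computational subspace. *)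

theory Defs
  imports "HOL-Analysis.Analysis"
begin

text \<open>An m-mode passive linear optical network is a unitary m x m matrix V,
  represented as a function nat => nat => complex with indices below m,
  acting as a_i^dagger |-> sum_j V j i a_j^dagger.\<close>
definition unitary_mat :: "nat \<Rightarrow> (nat \<Rightarrow> nat \<Rightarrow> complex) \<Rightarrow> bool" where
  "unitary_mat m V \<longleftrightarrow>
     (\<forall>i<m. \<forall>k<m. (\<Sum>j<m. cnj (V j i) * V j k) = (if i = k then 1 else 0))"

text \<open>Signal modes: qubit 1 uses modes 0 (logical 0) and 1 (logical 1);
  qubit 2 uses modes 2 and 3. Modes 4..m-1 are auxiliary (vacuum).\<close>
definition mode1 :: "bool \<Rightarrow> nat" where "mode1 b = (if b then 1 else 0)"
definition mode2 :: "bool \<Rightarrow> nat" where "mode2 b = (if b then 3 else 2)"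

text \<open>Amplitude <1_k 1_l, vac_aux | U_V | 1_i 1_j, vac_aux> for distinct modes i,j
  and distinct k,l: the permanent of the 2x2 submatrix of V. This is the entry
  of the post-selected operator from input |b1 b2> to output |c1 c2>.\<close>
definition postsel_amp :: "(nat \<Rightarrow> nat \<Rightarrow> complex) \<Rightarrow> bool \<Rightarrow> bool \<Rightarrow> bool \<Rightarrow> bool \<Rightarrow> complex" where
  "postsel_amp V c1 c2 b1 b2 =
     V (mode1 c1) (mode1 b1) * V (mode2 c2) (mode2 b2)
   + V (mode2 c2) (mode1 b1) * V (mode1 c1) (mode2 b2)"

definition cphase_entry :: "real \<Rightarrow> bool \<Rightarrow> bool \<Rightarrow> bool \<Rightarrow> bool \<Rightarrow> complex" where
  "cphase_entry \<phi> c1 c2 b1 b2 =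
     (if c1 = b1 \<and> c2 = b2 then (if b1 \<and> b2 then exp (\<i> * complex_of_real \<phi>) else 1) else 0)"

definition implements_cphase :: "nat \<Rightarrow> (nat \<Rightarrow> nat \<Rightarrow> complex) \<Rightarrow> real \<Rightarrow> real \<Rightarrow> bool" where
  "implements_cphase m V \<phi> p \<longleftrightarrow>
     4 \<le> m \<and> unitary_mat m V \<and> p > 0 \<and>
     (\<exists>c. cmod c = 1 \<and>
        (\<forall>c1 c2 b1 b2. postsel_amp V c1 c2 b1 b2
            = c * complex_of_real (sqrt p) * cphase_entry \<phi> c1 c2 b1 b2))"

end

theory Submission
  imports Defs
begin

lemma key:
  fixes s a b S00 S01 S10 S11 u0 u1 v0 v1 w0 w1 :: complex
  assumes s: "s \<noteq> 0"
   and e1: "a * S00 + u0 * v0 = s" and e2: "a * S01 + u0 * v1 = 0" and e3: "a * S10 + u1 * v0 = 0" and e4: "a * S11 + u1 * v1 = s"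
   and f1: "b * S00 + u0 * w0 = 0" and f2: "b * S01 + u0 * w1 = 0" and f3: "b * S10 + u1 * w0 = 0" and f4: "b * S11 + u1 * w1 = 0"
  shows "b = 0"
proof (rule ccontr)
  assume b: "b \<noteq> 0"
  have X00: "u0 * v0 = s - a * S00" using e1 by (simp add: algebra_simps)
  have X01: "u0 * v1 = - a * S01" using e2 by (simp add: add_eq_0_iff)
  have X10: "u1 * v0 = - a * S10" using e3 by (simp add: add_eq_0_iff)
  have X11: "u1 * v1 = s - a * S11" using e4 by (simp add: algebra_simps)
  have Y00: "u0 * w0 = - b * S00" using f1 by (simp add: add_eq_0_iff)
  have Y01: "u0 * w1 = - b * S01" using f2 by (simp add: add_eq_0_iff)
  have Y10: "u1 * w0 = - b * S10" using f3 by (simp add: add_eq_0_iff)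
  have Y11: "u1 * w1 = - b * S11" using f4 by (simp add: add_eq_0_iff)
  have i1: "(u0 * v0) * (u1 * w0) = (u1 * v0) * (u0 * w0)" by (simp add: algebra_simps)
  hence "(s - a * S00) * (- b * S10) = (- a * S10) * (- b * S00)" by (simp only: X00 Y10 X10 Y00)
  hence "s * b * S10 = 0" by (simp add: algebra_simps)
  hence S10: "S10 = 0" using s b by simp
  have i2: "(u1 * v1) * (u0 * w1) = (u0 * v1) * (u1 * w1)" by (simp add: algebra_simps)
  hence "(s - a * S11) * (- b * S01) = (- a * S01) * (- b * S11)" by (simp only: X11 Y01 X01 Y11)
  hence "s * b * S01 = 0" by (simp add: algebra_simps)
  hence S01: "S01 = 0" using s b by simp
  have i3: "(u0 * v0) * (u1 * w1) = (u1 * v0) * (u0 * w1)" by (simp add: algebra_simps)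
  hence "(s - a * S00) * (- b * S11) = (- a * S10) * (- b * S01)" by (simp only: X00 Y11 X10 Y01)
  hence c3: "(s - a * S00) * S11 = 0" using b S10 by simp
  have i4: "(u1 * v1) * (u0 * w0) = (u0 * v1) * (u1 * w0)" by (simp add: algebra_simps)
  hence "(s - a * S11) * (- b * S00) = (- a * S01) * (- b * S10)" by (simp only: X11 Y00 X01 Y10)
  hence c4: "(s - a * S11) * S00 = 0" using b S10 by simp
  have i5: "(u0 * w0) * (u1 * w1) = (u0 * w1) * (u1 * w0)" by (simp add: algebra_simps)
  hence "(- b * S00) * (- b * S11) = (- b * S01) * (- b * S10)" by (simp only: Y00 Y11 Y01 Y10)
  hence c5: "S00 * S11 = 0" using b S10 by simp
  have i6: "(u0 * v0) * (u1 * v1) = (u0 * v1) * (u1 * v0)" by (simp add: algebra_simps)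
  hence "(s - a * S00) * (s - a * S11) = (- a * S01) * (- a * S10)" by (simp only: X00 X11 X01 X10)
  hence c6: "(s - a * S00) * (s - a * S11) = 0" using S10 by simp
  show False
  proof (cases "s = a * S00")
    case True
    then have "S00 \<noteq> 0" using s by auto
    then have "S11 = 0" using c5 by simp
    then show False using c4 s \<open>S00 \<noteq> 0\<close> by simp
  next
    case False
    then have "s = a * S11" using c6 by simp
    then have "S11 \<noteq> 0" using s by auto
    then have "S00 = 0" using c5 by simp
    then show False using c3 s \<open>S11 \<noteq> 0\<close> by simp
  qed
qed

lemma re_aux: "Re (cnj s * (s * z)) = (cmod s)^2 * Re z"
proof -
  have e: "cnj s * s = complex_of_real ((cmod s)^2)"
    by (simp only: complex_norm_square mult.commute)
  have "cnj s * (s * z) = complex_of_real ((cmod s)^2) * z"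
    by (simp only: mult.assoc[symmetric] e)
  then show ?thesis by (simp add: scaleR_conv_of_real[symmetric] del: of_real_power)
qed

lemma core:
  fixes s w P00 P01 P10 P11 S00 S01 S10 S11 Q00 Q01 Q10 Q11 R00 R01 R10 R11 :: complex
  assumes s: "s \<noteq> 0" and w: "cmod w = 1"
  and E0000: "P00 * S00 + R00 * Q00 = s"
  and E0001: "P00 * S01 + R00 * Q01 = 0"
  and E0010: "P01 * S00 + R01 * Q00 = 0"
  and E0011: "P01 * S01 + R01 * Q01 = 0"
  and E0100: "P00 * S10 + R10 * Q00 = 0"
  and E0101: "P00 * S11 + R10 * Q01 = s"
  and E0110: "P01 * S10 + R11 * Q00 = 0"
  and E0111: "P01 * S11 + R11 * Q01 = 0"
  and E1000: "P10 * S00 + R00 * Q10 = 0"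
  and E1001: "P10 * S01 + R00 * Q11 = 0"
  and E1010: "P11 * S00 + R01 * Q10 = s"
  and E1011: "P11 * S01 + R01 * Q11 = 0"
  and E1100: "P10 * S10 + R10 * Q10 = 0"
  and E1101: "P10 * S11 + R10 * Q11 = 0"
  and E1110: "P11 * S10 + R11 * Q10 = 0"
  and E1111: "P11 * S11 + R11 * Q11 = s * w"
  shows "\<exists>\<alpha> \<beta>. ((\<alpha> = P00 * S00 \<and> \<beta> = R00 * Q00) \<or> (\<alpha> = P00 * S11 \<and> \<beta> = R10 * Q01)
     \<or> (\<alpha> = P11 * S00 \<and> \<beta> = R01 * Q10) \<or> (\<alpha> = P11 * S11 \<and> \<beta> = R11 * Q11))
     \<and> cmod \<alpha> = cmod s \<and> cmod \<beta> = cmod s * cmod (1 - w)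
     \<and> Re (cnj \<alpha> * \<beta>) = (cmod s)^2 * (Re w - 1)"
proof -
  have P10: "P10 = 0"
    by (rule key[of s P00 S00 R00 Q00 S01 Q01 S10 R10 S11 P10 Q10 Q11]) (use assms in auto)
  have P01: "P01 = 0"
    by (rule key[of s P00 S00 Q00 R00 S10 R10 S01 Q01 S11 P01 R01 R11])
       (use assms in \<open>simp_all add: ac_simps\<close>)
  have S10: "S10 = 0"
    by (rule key[of s S00 P00 Q00 R00 P01 R01 P10 Q10 P11 S10 R10 R11])
       (use assms in \<open>simp_all add: ac_simps\<close>)
  have S01: "S01 = 0"
    by (rule key[of s S00 P00 R00 Q00 P10 Q10 P01 R01 P11 S01 Q01 Q11])
       (use assms in \<open>simp_all add: ac_simps\<close>)
  have z1: "R10 * Q00 = 0" using E0100 P10 S10 by simp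
  have z2: "R00 * Q10 = 0" using E1000 P10 by simp
  have z3: "R00 * Q11 = 0" using E1001 P10 by simp
  have z4: "R10 * Q10 = 0" using E1100 P10 by simp
  have z5: "R10 * Q11 = 0" using E1101 P10 by simp
  have z6: "R11 * Q10 = 0" using E1110 S10 by simp
  have b1: "(R00 * Q00) * (R10 * Q01) = 0"
  proof -
    have "(R00 * Q00) * (R10 * Q01) = (R10 * Q00) * (R00 * Q01)" by (simp only: ac_simps)
    then show ?thesis using z1 by (simp only: mult_zero_left)
  qed
  have b2: "(R00 * Q00) * (R01 * Q10) = 0" using z2 by auto
  have b3: "(R00 * Q00) * (R11 * Q11) = 0" using z3 by auto
  have b4: "(R10 * Q01) * (R01 * Q10) = 0" using z4 by auto
  have b5: "(R10 * Q01) * (R11 * Q11) = 0" using z5 by auto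
  have b6: "(R01 * Q10) * (R11 * Q11) = 0" using z6 by auto
  have A: "(P00 * S00) * (P11 * S11) = (P00 * S11) * (P11 * S00)" by (simp add: ac_simps)
  have wc: "w * cnj w = 1" using w by (metis complex_norm_square mult.commute norm_one of_real_1 power_one)
  have nmc: "cmod (w - 1) = cmod (1 - w)" by (rule norm_minus_commute)
  show ?thesis
  proof (cases "R11 * Q11 = 0")
    case F11: True
    show ?thesis
    proof (cases "R01 * Q10 = 0")
      case F10: True
      show ?thesis
      proof (cases "R10 * Q01 = 0")
        case F01: True
        show ?thesis
        proof (cases "R00 * Q00 = 0")
          case F00: True
          have a: "P00 * S00 = s" "P00 * S11 = s" "P11 * S00 = s" "P11 * S11 = s * w"
            using E0000 E0101 E1010 E1111 F00 F01 F10 F11 by auto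
          have "s * (s * w) = s * s" using A a by simp
          then have w1: "w = 1" using s by simp
          show ?thesis by (rule exI[of _ "P00 * S00"], rule exI[of _ "R00 * Q00"]) (simp add: a F00 w1)
        next
          case F00: False
          have a: "P00 * S11 = s" "P11 * S00 = s" "P11 * S11 = s * w"
            using E0101 E1010 E1111 F01 F10 F11 by auto
          have "(P00 * S00) * (s * w) = s * s" using A a by simp
          then have "(P00 * S00) * (s * w) * cnj w = s * s * cnj w" by simp
          then have "s * (P00 * S00) = s * (s * cnj w)"
            by (simp add: mult.assoc wc)
          then have a0: "P00 * S00 = s * cnj w" using s by simp
          have b0: "R00 * Q00 = s * (1 - cnj w)" using E0000 a0 by (simp add: algebra_simps)
          have "cmod (1 - cnj w) = cmod (1 - w)"
            by (metis complex_cnj_diff complex_cnj_one complex_mod_cnj)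
          moreover have "Re (cnj (s * cnj w) * (s * (1 - cnj w))) = (cmod s)^2 * (Re w - 1)"
          proof -
            have "cnj (s * cnj w) * (s * (1 - cnj w)) = cnj s * (s * (w - w * cnj w))"
              by (simp add: algebra_simps)
            also have "\<dots> = cnj s * (s * (w - 1))" by (simp only: wc)
            finally show ?thesis using re_aux[of s "w - 1"] by (simp only: minus_complex.sel one_complex.sel)
          qed
          ultimately show ?thesis
            by (intro exI[of _ "P00 * S00"] exI[of _ "R00 * Q00"]) (simp add: a0 b0 norm_mult w)
        qed
      next
        case F01: False
        have a: "P00 * S00 = s" "P11 * S00 = s" "P11 * S11 = s * w"
          using E0000 E1010 E1111 b1 b4 b5 F01 F10 F11 by auto
        have "s * (s * w) = (P00 * S11) * s" using A a by simp
        then have a0: "P00 * S11 = s * w" using s by (simp add: mult.commute)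
        have b0: "R10 * Q01 = s * (1 - w)" using E0101 a0 by (simp add: algebra_simps)
        have "Re (cnj (s * w) * (s * (1 - w))) = (cmod s)^2 * (Re w - 1)"
        proof -
          have "cnj (s * w) * (s * (1 - w)) = cnj s * (s * (cnj w - w * cnj w))"
            by (simp add: algebra_simps)
          also have "\<dots> = cnj s * (s * (cnj w - 1))" by (simp only: wc mult.commute)
          finally show ?thesis using re_aux[of s "cnj w - 1"] by (simp only: minus_complex.sel one_complex.sel cnj.sel(1))
        qed
        then show ?thesis
          by (intro exI[of _ "P00 * S11"] exI[of _ "R10 * Q01"]) (simp add: a0 b0 norm_mult w)
      qed
    next
      case F10: False
      have F01: "R10 * Q01 = 0" using b4 F10 by simp
      have F00: "R00 * Q00 = 0" using b2 F10 by simp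
      have a: "P00 * S00 = s" "P00 * S11 = s" "P11 * S11 = s * w"
        using E0000 E0101 E1111 F00 F01 F11 by auto
      have "s * (s * w) = s * (P11 * S00)" using A a by simp
      then have a0: "P11 * S00 = s * w" using s by simp
      have b0: "R01 * Q10 = s * (1 - w)" using E1010 a0 by (simp add: algebra_simps)
      have "Re (cnj (s * w) * (s * (1 - w))) = (cmod s)^2 * (Re w - 1)"
      proof -
        have "cnj (s * w) * (s * (1 - w)) = cnj s * (s * (cnj w - w * cnj w))"
          by (simp add: algebra_simps)
        also have "\<dots> = cnj s * (s * (cnj w - 1))" by (simp only: wc mult.commute)
        finally show ?thesis using re_aux[of s "cnj w - 1"] by (simp only: minus_complex.sel one_complex.sel cnj.sel(1))
      qed
      then show ?thesis
        by (intro exI[of _ "P11 * S00"] exI[of _ "R01 * Q10"]) (simp add: a0 b0 norm_mult w)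
    qed
  next
    case F11: False
    have F00: "R00 * Q00 = 0" using b3 F11 by simp
    have F01: "R10 * Q01 = 0" using b5 F11 by simp
    have F10: "R01 * Q10 = 0" using b6 F11 by simp
    have a: "P00 * S00 = s" "P00 * S11 = s" "P11 * S00 = s"
      using E0000 E0101 E1010 F00 F01 F10 by auto
    have "s * (P11 * S11) = s * s" using A a by simp
    then have a0: "P11 * S11 = s" using s by simp
    have b0: "R11 * Q11 = s * (w - 1)" using E1111 a0 by (simp add: algebra_simps)
    have "Re (cnj s * (s * (w - 1))) = (cmod s)^2 * (Re w - 1)" using re_aux[of s "w - 1"] by (simp only: minus_complex.sel one_complex.sel)
    then show ?thesis
      by (intro exI[of _ "P11 * S11"] exI[of _ "R11 * Q11"]) (simp add: a0 b0 norm_mult nmc)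
  qed
qed

lemma cmod_add_sq: "(cmod (x + y))^2 = (cmod x)^2 + (cmod y)^2 + 2 * Re (x * cnj y)"
  unfolding cmod_power2 by (simp add: power2_eq_square algebra_simps)

lemma two_col:
  assumes U: "unitary_mat m V" and k: "k < m" and l: "l < m" and kl: "k \<noteq> l"
  shows "(\<Sum>n<m. (cmod (V n k * u + V n l * v))^2) = (cmod u)^2 + (cmod v)^2"
proof -
  have s1: "(\<Sum>n<m. cnj (V n k) * V n k) = 1" using U k unfolding unitary_mat_def by auto
  have s2: "(\<Sum>n<m. cnj (V n l) * V n l) = 1" using U l unfolding unitary_mat_def by auto
  have s3: "(\<Sum>n<m. cnj (V n k) * V n l) = 0" using U k l kl unfolding unitary_mat_def by auto
  have s4: "(\<Sum>n<m. cnj (V n l) * V n k) = 0" using U k l kl unfolding unitary_mat_def by auto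
  have "(\<Sum>n<m. (V n k * u + V n l * v) * cnj (V n k * u + V n l * v))
     = u * cnj u * (\<Sum>n<m. cnj (V n k) * V n k) + u * cnj v * (\<Sum>n<m. cnj (V n l) * V n k)
       + v * cnj u * (\<Sum>n<m. cnj (V n k) * V n l) + v * cnj v * (\<Sum>n<m. cnj (V n l) * V n l)"
    by (simp add: sum_distrib_left sum.distrib algebra_simps)
  also have "\<dots> = u * cnj u + v * cnj v" using s1 s2 s3 s4 by simp
  finally have e: "(\<Sum>n<m. (V n k * u + V n l * v) * cnj (V n k * u + V n l * v)) = u * cnj u + v * cnj v" .
  have "complex_of_real (\<Sum>n<m. (cmod (V n k * u + V n l * v))^2)
      = (\<Sum>n<m. (V n k * u + V n l * v) * cnj (V n k * u + V n l * v))"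
    by (simp only: of_real_sum complex_norm_square)
  also have "\<dots> = complex_of_real ((cmod u)^2 + (cmod v)^2)" using e by (simp only: of_real_add complex_norm_square)
  finally show ?thesis using of_real_eq_iff by blast
qed

lemma two_rows:
  assumes U: "unitary_mat m V" and "i < m" "j < m" "i \<noteq> j" "k < m" "l < m" "k \<noteq> l"
  shows "(cmod (V i k * u + V i l * v))^2 + (cmod (V j k * u + V j l * v))^2 \<le> (cmod u)^2 + (cmod v)^2"
proof -
  let ?f = "\<lambda>n. (cmod (V n k * u + V n l * v))^2"
  have "?f i + ?f j = sum ?f {i, j}" using assms by simp
  also have "\<dots> \<le> sum ?f {..<m}" by (rule sum_mono2) (use assms in auto)
  also have "\<dots> = (cmod u)^2 + (cmod v)^2" using two_col assms by blast
  finally show ?thesis .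
qed

lemma expand2:
  fixes a q r b u v :: complex
  shows "(cmod (a * u + q * v))^2 + (cmod (r * u + b * v))^2
     = ((cmod a)^2 + (cmod r)^2) * (cmod u)^2 + ((cmod q)^2 + (cmod b)^2) * (cmod v)^2
       + 2 * Re (cnj u * v * (cnj a * q + cnj r * b))"
  unfolding cmod_power2 by (simp add: power2_eq_square algebra_simps)

lemma chan:
  assumes U: "unitary_mat m V" and "i < m" "j < m" "i \<noteq> j" "k < m" "l < m" "k \<noteq> l"
  shows "cmod (V i k * V j l) + cmod (V j k * V i l)
     + sqrt (2 * cmod (V i k * V j l) * cmod (V j k * V i l) + 2 * Re (cnj (V i k * V j l) * (V j k * V i l))) \<le> 1"
proof -
  define a where "a = V i k"
  define q where "q = V i l"
  define r where "r = V j k"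
  define b where "b = V j l"
  define z where "z = cnj a * q + cnj r * b"
  define u :: complex where "u = complex_of_real (1 / sqrt 2)"
  define e :: complex where "e = (if z = 0 then 1 else cnj z / complex_of_real (cmod z))"
  define v where "v = u * e"
  have "cmod u = 1 / sqrt 2" unfolding u_def norm_of_real by simp
  then have cu: "(cmod u)^2 = 1/2" by (simp add: power_divide)
  have ce: "cmod e = 1" unfolding e_def by (simp add: norm_divide)
  have cv: "(cmod v)^2 = 1/2" unfolding v_def using cu ce by (simp add: norm_mult power_mult_distrib)
  have rz: "Re (cnj u * v * z) = cmod z / 2"
  proof -
    have r2: "1/sqrt 2 * (1/sqrt 2) = (1/2::real)" by simp
    have uu: "cnj u * u = complex_of_real (1/2)" unfolding u_def
      by (simp only: complex_cnj_complex_of_real of_real_mult[symmetric] r2)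
    have "cnj u * v * z = (cnj u * u) * (e * z)" unfolding v_def by (simp only: ac_simps)
    then have "cnj u * v * z = complex_of_real (1/2) * (e * z)" using uu by simp
    moreover have "e * z = complex_of_real (cmod z)"
    proof (cases "z = 0")
      case True then show ?thesis unfolding e_def by simp
    next
      case False
      then have "e * z = (cnj z * z) / complex_of_real (cmod z)" unfolding e_def by simp
      also have "\<dots> = complex_of_real ((cmod z)^2) / complex_of_real (cmod z)"
        by (simp only: complex_norm_square mult.commute)
      also have "\<dots> = complex_of_real (cmod z)" using False by (simp add: power2_eq_square)
      finally show ?thesis .
    qed
    ultimately have "cnj u * v * z = complex_of_real (1/2 * cmod z)" by (simp only: of_real_mult)
    then show ?thesis by (simp only: Re_complex_of_real)
  qed
  have le1: "(cmod (a * u + q * v))^2 + (cmod (r * u + b * v))^2 \<le> 1"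
    using two_rows[OF assms, of u v] cu cv unfolding a_def q_def r_def b_def by simp
  have main: "((cmod a)^2 + (cmod r)^2 + (cmod q)^2 + (cmod b)^2) / 2 + cmod z \<le> 1"
    using le1 unfolding expand2 cu cv rz z_def[symmetric] by (simp add: field_simps)
  have h1: "2 * cmod (a * b) \<le> (cmod a)^2 + (cmod b)^2"
    using sum_squares_bound[of "cmod a" "cmod b"] by (simp add: norm_mult)
  have h2: "2 * cmod (r * q) \<le> (cmod q)^2 + (cmod r)^2"
    using sum_squares_bound[of "cmod r" "cmod q"] by (simp add: norm_mult)
  have zz: "(cmod z)^2 = (cmod (cnj a * q))^2 + (cmod (cnj r * b))^2 + 2 * Re (cnj a * q * cnj (cnj r * b))"
    unfolding z_def by (rule cmod_add_sq)
  have pr: "cnj a * q * cnj (cnj r * b) = cnj (a * b) * (r * q)" by (simp add: ac_simps)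
  have h3: "2 * cmod (a * b) * cmod (r * q) \<le> (cmod (cnj a * q))^2 + (cmod (cnj r * b))^2"
    using sum_squares_bound[of "cmod (cnj a * q)" "cmod (cnj r * b)"] by (simp add: norm_mult ac_simps)
  have h4: "sqrt (2 * cmod (a * b) * cmod (r * q) + 2 * Re (cnj (a * b) * (r * q))) \<le> cmod z"
  proof -
    have "2 * cmod (a * b) * cmod (r * q) + 2 * Re (cnj (a * b) * (r * q)) \<le> (cmod z)^2"
      using h3 unfolding zz pr by linarith
    then have "sqrt (2 * cmod (a * b) * cmod (r * q) + 2 * Re (cnj (a * b) * (r * q))) \<le> sqrt ((cmod z)^2)"
      by (rule real_sqrt_le_mono)
    then show ?thesis by simp
  qed
  have "cmod (a * b) + cmod (r * q) + sqrt (2 * cmod (a * b) * cmod (r * q) + 2 * Re (cnj (a * b) * (r * q))) \<le> 1"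
    using main h1 h2 h4 by argo
  then show ?thesis unfolding a_def q_def r_def b_def .
qed

lemma expi: "exp (\<i> * complex_of_real x) = Complex (cos x) (sin x)"
  by (simp add: exp_Euler cos_of_real sin_of_real complex_eq_iff)

lemma trig_facts:
  fixes \<phi> :: real
  assumes "0 \<le> \<phi>" "\<phi> \<le> pi"
  shows "0 \<le> sin (\<phi>/2)" "sin (\<phi>/2) \<le> 1"
    "cmod (1 - exp (\<i> * complex_of_real \<phi>)) = 2 * sin (\<phi>/2)"
    "Re (exp (\<i> * complex_of_real \<phi>)) = 1 - 2 * (sin (\<phi>/2))^2"
    "sin ((pi - \<phi>)/4) = sqrt ((1 - sin (\<phi>/2))/2)"
    "cos ((\<phi> + pi)/4) = sin ((pi - \<phi>)/4)"
    "exp (\<i> * complex_of_real \<phi>) - 1 = complex_of_real (2 * sin (\<phi>/2)) * exp (\<i> * complex_of_real ((\<phi> + pi)/2))"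
    "(2::real) powr (3/2) = 2 * sqrt 2"
proof -
  show s0: "0 \<le> sin (\<phi>/2)" using assms by (intro sin_ge_zero) auto
  show "sin (\<phi>/2) \<le> 1" by simp
  have ex: "exp (\<i> * complex_of_real \<phi>) = Complex (cos \<phi>) (sin \<phi>)"
    by (simp add: exp_Euler cos_of_real sin_of_real complex_eq_iff)
  have cd: "cos \<phi> = 1 - 2 * (sin (\<phi>/2))^2" using cos_double_sin[of "\<phi>/2"] by simp
  have sd: "sin \<phi> = 2 * sin (\<phi>/2) * cos (\<phi>/2)" using sin_double[of "\<phi>/2"] by simp
  show "Re (exp (\<i> * complex_of_real \<phi>)) = 1 - 2 * (sin (\<phi>/2))^2" using ex cd by simp
  have "(cmod (1 - exp (\<i> * complex_of_real \<phi>)))^2 = (1 - cos \<phi>)^2 + (sin \<phi>)^2"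
    using ex by (simp add: cmod_power2)
  also have "\<dots> = 2 - 2 * cos \<phi>" by (simp add: power2_eq_square algebra_simps sin_squared_eq)
  also have "\<dots> = (2 * sin (\<phi>/2))^2" using cd by (simp add: power2_eq_square)
  finally show "cmod (1 - exp (\<i> * complex_of_real \<phi>)) = 2 * sin (\<phi>/2)"
    using s0 by (metis norm_ge_zero power2_eq_imp_eq mult_nonneg_nonneg zero_le_numeral)
  have a: "0 \<le> sin ((pi - \<phi>)/4)" using assms by (intro sin_ge_zero) auto
  have "cos (2 * ((pi - \<phi>)/4)) = 1 - 2 * (sin ((pi - \<phi>)/4))^2" by (rule cos_double_sin)
  moreover have "cos (2 * ((pi - \<phi>)/4)) = sin (\<phi>/2)"
  proof -
    have h: "2 * ((pi - \<phi>)/4) = pi/2 - \<phi>/2" by simp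
    show ?thesis unfolding h by (simp add: cos_diff)
  qed
  ultimately have "(sin ((pi - \<phi>)/4))^2 = (1 - sin (\<phi>/2))/2" by simp
  then show "sin ((pi - \<phi>)/4) = sqrt ((1 - sin (\<phi>/2))/2)" using a by (metis real_sqrt_abs abs_of_nonneg)
  show "cos ((\<phi> + pi)/4) = sin ((pi - \<phi>)/4)"
  proof -
    have h: "(\<phi> + pi)/4 = pi/2 - (pi - \<phi>)/4" by (simp add: field_simps)
    show ?thesis unfolding h by (simp add: cos_diff)
  qed
  have e2: "exp (\<i> * complex_of_real ((\<phi> + pi)/2)) = Complex (- sin (\<phi>/2)) (cos (\<phi>/2))"
  proof -
    have "exp (\<i> * complex_of_real ((\<phi> + pi)/2)) = Complex (cos ((\<phi> + pi)/2)) (sin ((\<phi> + pi)/2))"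
      by (rule expi)
    moreover have "cos ((\<phi> + pi)/2) = - sin (\<phi>/2)"
    proof -
      have h: "(\<phi> + pi)/2 = \<phi>/2 + pi/2" by simp
      show ?thesis unfolding h by (simp add: cos_add)
    qed
    moreover have "sin ((\<phi> + pi)/2) = cos (\<phi>/2)"
    proof -
      have h: "(\<phi> + pi)/2 = \<phi>/2 + pi/2" by simp
      show ?thesis unfolding h by (simp add: sin_add)
    qed
    ultimately show ?thesis by simp
  qed
  show "exp (\<i> * complex_of_real \<phi>) - 1 = complex_of_real (2 * sin (\<phi>/2)) * exp (\<i> * complex_of_real ((\<phi> + pi)/2))"
    unfolding ex e2 using cd sd by (simp add: complex_eq_iff power2_eq_square)
  show "(2::real) powr (3/2) = 2 * sqrt 2"
  proof -
    have "(2::real) powr (3/2) = 2 powr (1 + 1/2)" by simp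
    also have "\<dots> = 2 powr 1 * 2 powr (1/2)" by (rule powr_add)
    also have "\<dots> = 2 * 2 powr (1/2)" by simp
    also have "\<dots> = 2 * sqrt 2" by (simp add: powr_half_sqrt)
    finally show ?thesis .
  qed
qed

definition Vm :: "complex \<Rightarrow> complex \<Rightarrow> complex \<Rightarrow> complex \<Rightarrow> nat \<Rightarrow> nat \<Rightarrow> complex" where
 "Vm t tau y g i j = (if i = 0 \<and> j = 0 then t else if i = 4 \<and> j = 0 then tau
   else if i = 0 \<and> j = 4 then tau else if i = 4 \<and> j = 4 then - t
   else if i = 2 \<and> j = 2 then t else if i = 5 \<and> j = 2 then tau
   else if i = 2 \<and> j = 5 then tau else if i = 5 \<and> j = 5 then - t
   else if i = 1 \<and> j = 1 then t else if i = 1 \<and> j = 3 then y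
   else if i = 3 \<and> j = 1 then y else if i = 3 \<and> j = 3 then t
   else if i = 6 \<and> j = 1 then g else if i = 6 \<and> j = 3 then - g
   else if i = 1 \<and> j = 6 then g else if i = 3 \<and> j = 6 then - g
   else if i = 6 \<and> j = 6 then - (t - cnj y) else 0)"

lemma unit7:
  assumes ct: "cnj t = t" and cta: "cnj tau = tau" and cg: "cnj g = g"
   and h1: "t * t + tau * tau = 1"
   and h2: "t * t + cnj y * y + g * g = 1"
   and h3: "t * (y + cnj y) = g * g"
   and h4: "2 * (g * g) + (t - y) * (t - cnj y) = 1"
  shows "unitary_mat 7 (Vm t tau y g)"
  unfolding unitary_mat_def
  apply (simp add: eval_nat_numeral lessThan_Suc less_Suc_eq)
  apply (simp add: Vm_def ct cta cg)
  using h1 h2 h3 h4 by (auto simp: algebra_simps)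


lemma amp_ok:
  assumes "y * y = t * t * (e - 1)"
  shows "postsel_amp (Vm t tau y g) c1 c2 b1 b2
     = 1 * (t * t) * (if c1 = b1 \<and> c2 = b2 then (if b1 \<and> b2 then e else 1) else 0)"
  using assms
  by (cases c1; cases c2; cases b1; cases b2) (simp_all add: postsel_amp_def mode1_def mode2_def Vm_def algebra_simps)

theorem mainTheorem1:
  fixes \<phi> :: real
  assumes "0 \<le> \<phi>" and "\<phi> \<le> pi"
  defines "p_opt \<equiv> 1 / (1 + 2 * \<bar>sin (\<phi> / 2)\<bar>
                 + 2 powr (3/2) * sin ((pi - \<phi>) / 4) * sqrt \<bar>sin (\<phi> / 2)\<bar>) ^ 2"
  shows "(\<exists>m V. implements_cphase m V \<phi> p_opt) \<and>
         (\<forall>m V p. implements_cphase m V \<phi> p \<longrightarrow> p \<le> p_opt)"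
proof -
  define \<sigma> where "\<sigma> = sin (\<phi>/2)"
  note tf = trig_facts[OF assms(1,2), folded \<sigma>_def]
  have s0: "0 \<le> \<sigma>" and s1: "\<sigma> \<le> 1" using tf by auto
  define K where "K = 1 + 2 * \<sigma> + 2 * sqrt \<sigma> * sqrt (1 - \<sigma>)"
  have K1: "1 \<le> K" using s0 s1 unfolding K_def by simp
  have pK: "p_opt = 1 / K^2"
  proof -
    have r: "sqrt 2 * sqrt ((1 - \<sigma>)/2) = sqrt (1 - \<sigma>)" by (simp add: real_sqrt_mult[symmetric])
    have eqn: "2 powr (3/2) * sin ((pi - \<phi>)/4) * sqrt \<bar>\<sigma>\<bar> = 2 * sqrt \<sigma> * sqrt (1 - \<sigma>)"
      unfolding tf(5) tf(8) using s0 r by (simp add: algebra_simps)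
    show ?thesis unfolding p_opt_def K_def \<sigma>_def[symmetric] eqn using s0 by simp
  qed
  have ub: "\<forall>m V p. implements_cphase m V \<phi> p \<longrightarrow> p \<le> p_opt"
  proof (intro allI impI)
    fix m V p assume imp: "implements_cphase m V \<phi> p"
    then have m4: "4 \<le> m" and U: "unitary_mat m V" and pp: "p > 0"
      by (auto simp: implements_cphase_def)
    from imp obtain c where c1: "cmod c = 1" and
      H: "\<forall>c1 c2 b1 b2. postsel_amp V c1 c2 b1 b2 = c * complex_of_real (sqrt p) * cphase_entry \<phi> c1 c2 b1 b2"
      by (auto simp: implements_cphase_def)
    define s where "s = c * complex_of_real (sqrt p)"
    define w where "w = exp (\<i> * complex_of_real \<phi>)"
    have sn: "cmod s = sqrt p" using pp by (simp add: s_def norm_mult c1)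
    have s_ne: "s \<noteq> 0" using sn pp by auto
    have wn: "cmod w = 1" by (simp add: w_def)
    have E: "\<And>c1 c2 b1 b2. postsel_amp V c1 c2 b1 b2 = s * cphase_entry \<phi> c1 c2 b1 b2"
      using H s_def by simp
    have E0000: "V 0 0 * V 2 2 + V 2 0 * V 0 2 = s"
      using E[of False False False False] by (simp add: postsel_amp_def mode1_def mode2_def cphase_entry_def w_def)
    have E0001: "V 0 0 * V 2 3 + V 2 0 * V 0 3 = 0"
      using E[of False False False True] by (simp add: postsel_amp_def mode1_def mode2_def cphase_entry_def w_def)
    have E0010: "V 0 1 * V 2 2 + V 2 1 * V 0 2 = 0"
      using E[of False False True False] by (simp add: postsel_amp_def mode1_def mode2_def cphase_entry_def w_def)
    have E0011: "V 0 1 * V 2 3 + V 2 1 * V 0 3 = 0"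
      using E[of False False True True] by (simp add: postsel_amp_def mode1_def mode2_def cphase_entry_def w_def)
    have E0100: "V 0 0 * V 3 2 + V 3 0 * V 0 2 = 0"
      using E[of False True False False] by (simp add: postsel_amp_def mode1_def mode2_def cphase_entry_def w_def)
    have E0101: "V 0 0 * V 3 3 + V 3 0 * V 0 3 = s"
      using E[of False True False True] by (simp add: postsel_amp_def mode1_def mode2_def cphase_entry_def w_def)
    have E0110: "V 0 1 * V 3 2 + V 3 1 * V 0 2 = 0"
      using E[of False True True False] by (simp add: postsel_amp_def mode1_def mode2_def cphase_entry_def w_def)
    have E0111: "V 0 1 * V 3 3 + V 3 1 * V 0 3 = 0"
      using E[of False True True True] by (simp add: postsel_amp_def mode1_def mode2_def cphase_entry_def w_def)
    have E1000: "V 1 0 * V 2 2 + V 2 0 * V 1 2 = 0"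
      using E[of True False False False] by (simp add: postsel_amp_def mode1_def mode2_def cphase_entry_def w_def)
    have E1001: "V 1 0 * V 2 3 + V 2 0 * V 1 3 = 0"
      using E[of True False False True] by (simp add: postsel_amp_def mode1_def mode2_def cphase_entry_def w_def)
    have E1010: "V 1 1 * V 2 2 + V 2 1 * V 1 2 = s"
      using E[of True False True False] by (simp add: postsel_amp_def mode1_def mode2_def cphase_entry_def w_def)
    have E1011: "V 1 1 * V 2 3 + V 2 1 * V 1 3 = 0"
      using E[of True False True True] by (simp add: postsel_amp_def mode1_def mode2_def cphase_entry_def w_def)
    have E1100: "V 1 0 * V 3 2 + V 3 0 * V 1 2 = 0"
      using E[of True True False False] by (simp add: postsel_amp_def mode1_def mode2_def cphase_entry_def w_def)
    have E1101: "V 1 0 * V 3 3 + V 3 0 * V 1 3 = 0"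
      using E[of True True False True] by (simp add: postsel_amp_def mode1_def mode2_def cphase_entry_def w_def)
    have E1110: "V 1 1 * V 3 2 + V 3 1 * V 1 2 = 0"
      using E[of True True True False] by (simp add: postsel_amp_def mode1_def mode2_def cphase_entry_def w_def)
    have E1111: "V 1 1 * V 3 3 + V 3 1 * V 1 3 = s * w"
      using E[of True True True True] by (simp add: postsel_amp_def mode1_def mode2_def cphase_entry_def w_def)
    obtain \<alpha> \<beta> where or: "(\<alpha> = V 0 0 * V 2 2 \<and> \<beta> = V 2 0 * V 0 2) \<or> (\<alpha> = V 0 0 * V 3 3 \<and> \<beta> = V 3 0 * V 0 3)
     \<or> (\<alpha> = V 1 1 * V 2 2 \<and> \<beta> = V 2 1 * V 1 2) \<or> (\<alpha> = V 1 1 * V 3 3 \<and> \<beta> = V 3 1 * V 1 3)"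
      and ca: "cmod \<alpha> = cmod s" and cb: "cmod \<beta> = cmod s * cmod (1 - w)"
      and cr: "Re (cnj \<alpha> * \<beta>) = (cmod s)^2 * (Re w - 1)"
      using core[OF s_ne wn E0000 E0001 E0010 E0011 E0100 E0101 E0110 E0111 E1000 E1001 E1010 E1011 E1100 E1101 E1110 E1111] by blast
    have c00: "cmod (V 0 0 * V 2 2) + cmod (V 2 0 * V 0 2)
       + sqrt (2 * cmod (V 0 0 * V 2 2) * cmod (V 2 0 * V 0 2) + 2 * Re (cnj (V 0 0 * V 2 2) * (V 2 0 * V 0 2))) \<le> 1"
      by (rule chan[OF U]) (use m4 in auto)
    have c01: "cmod (V 0 0 * V 3 3) + cmod (V 3 0 * V 0 3)
       + sqrt (2 * cmod (V 0 0 * V 3 3) * cmod (V 3 0 * V 0 3) + 2 * Re (cnj (V 0 0 * V 3 3) * (V 3 0 * V 0 3))) \<le> 1"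
      by (rule chan[OF U]) (use m4 in auto)
    have c10: "cmod (V 1 1 * V 2 2) + cmod (V 2 1 * V 1 2)
       + sqrt (2 * cmod (V 1 1 * V 2 2) * cmod (V 2 1 * V 1 2) + 2 * Re (cnj (V 1 1 * V 2 2) * (V 2 1 * V 1 2))) \<le> 1"
      by (rule chan[OF U]) (use m4 in auto)
    have c11: "cmod (V 1 1 * V 3 3) + cmod (V 3 1 * V 1 3)
       + sqrt (2 * cmod (V 1 1 * V 3 3) * cmod (V 3 1 * V 1 3) + 2 * Re (cnj (V 1 1 * V 3 3) * (V 3 1 * V 1 3))) \<le> 1"
      by (rule chan[OF U]) (use m4 in auto)
    have ch: "cmod \<alpha> + cmod \<beta> + sqrt (2 * cmod \<alpha> * cmod \<beta> + 2 * Re (cnj \<alpha> * \<beta>)) \<le> 1"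
      using or by (elim disjE conjE) (simp_all only: c00 c01 c10 c11)
    define S where "S = cmod s"
    have S0: "0 \<le> S" unfolding S_def by simp
    have cw: "cmod (1 - w) = 2 * \<sigma>" unfolding w_def by (rule tf(3))
    have rw: "Re w = 1 - 2 * \<sigma>^2" unfolding w_def by (rule tf(4))
    have ch2: "S + S * (2 * \<sigma>) + sqrt (2 * S * (S * (2 * \<sigma>)) + 2 * (S^2 * ((1 - 2 * \<sigma>^2) - 1))) \<le> 1"
      using ch unfolding ca cb cr cw rw S_def .
    have inner: "2 * S * (S * (2 * \<sigma>)) + 2 * (S^2 * ((1 - 2 * \<sigma>^2) - 1))
       = (S * (2 * sqrt \<sigma> * sqrt (1 - \<sigma>)))^2"
    proof -
      have "(S * (2 * sqrt \<sigma> * sqrt (1 - \<sigma>)))^2 = S^2 * 4 * (sqrt \<sigma>)^2 * (sqrt (1 - \<sigma>))^2"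
        by (simp add: power_mult_distrib)
      also have "\<dots> = S^2 * 4 * \<sigma> * (1 - \<sigma>)" using s0 s1 by simp
      finally show ?thesis by (simp add: algebra_simps power2_eq_square)
    qed
    have "sqrt ((S * (2 * sqrt \<sigma> * sqrt (1 - \<sigma>)))^2) = S * (2 * sqrt \<sigma> * sqrt (1 - \<sigma>))"
      using S0 s0 s1 by simp
    then have "S * K \<le> 1" using ch2 unfolding inner K_def by (simp add: algebra_simps)
    then have "sqrt p * K \<le> 1" using sn S_def by simp
    then have "sqrt p \<le> 1 / K" using K1 by (simp add: field_simps)
    then have "(sqrt p)^2 \<le> (1/K)^2" by (rule power_mono) (use pp in simp)
    then show "p \<le> p_opt" using pp unfolding pK by (simp add: power_divide)
  qed
  have ex: "\<exists>m V. implements_cphase m V \<phi> p_opt"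
  proof -
    define tr where "tr = 1 / sqrt K"
    define x where "x = tr * sqrt (2 * \<sigma>)"
    define \<gamma> where "\<gamma> = (\<phi> + pi) / 4"
    define gr where "gr = sqrt (2 * tr * x * cos \<gamma>)"
    define taur where "taur = sqrt (1 - tr^2)"
    define y where "y = complex_of_real x * exp (\<i> * complex_of_real \<gamma>)"
    have tr0: "0 \<le> tr" unfolding tr_def using K1 by simp
    have x0: "0 \<le> x" unfolding x_def using tr0 s0 by simp
    have K0: "0 \<le> K" using K1 by simp
    have tr2: "tr^2 = 1 / K" unfolding tr_def using K0 by (simp add: power_divide)
    have trK: "tr^2 * K = 1" using tr2 K1 by simp
    have tr1: "tr^2 \<le> 1" using tr2 K1 by simp
    have cg: "cos \<gamma> = sqrt ((1 - \<sigma>)/2)" unfolding \<gamma>_def using tf(6) tf(5) by simp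
    have cg0: "0 \<le> cos \<gamma>" using cg s1 by simp
    have x2: "x^2 = tr^2 * (2 * \<sigma>)" unfolding x_def using s0 by (simp add: power_mult_distrib)
    have txc: "2 * tr * x * cos \<gamma> = tr^2 * (2 * sqrt \<sigma> * sqrt (1 - \<sigma>))"
    proof -
      have "sqrt (2 * \<sigma>) * sqrt ((1 - \<sigma>)/2) = sqrt \<sigma> * sqrt (1 - \<sigma>)"
        by (simp add: real_sqrt_mult[symmetric])
      then show ?thesis unfolding x_def cg by (simp add: power2_eq_square algebra_simps)
    qed
    have key1: "tr^2 + x^2 + 2 * tr * x * cos \<gamma> = 1" using trK x2 txc unfolding K_def by (simp add: algebra_simps)
    have gr2: "gr^2 = 2 * tr * x * cos \<gamma>" unfolding gr_def using tr0 x0 cg0 by simp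
    have tau2: "taur^2 = 1 - tr^2" unfolding taur_def using tr1 by simp
    have ey: "exp (\<i> * complex_of_real \<gamma>) = Complex (cos \<gamma>) (sin \<gamma>)" by (rule expi)
    have yy: "cnj y * y = complex_of_real (x^2)"
      unfolding y_def ey by (simp add: complex_eq_iff power2_eq_square algebra_simps)
    have ypy: "y + cnj y = complex_of_real (2 * x * cos \<gamma>)"
      unfolding y_def ey by (simp add: complex_eq_iff)
    let ?t = "complex_of_real tr" and ?tau = "complex_of_real taur" and ?g = "complex_of_real gr"
    have U: "unitary_mat 7 (Vm ?t ?tau y ?g)"
    proof (rule unit7)
      show "cnj ?t = ?t" "cnj ?tau = ?tau" "cnj ?g = ?g" by simp_all
      show "?t * ?t + ?tau * ?tau = 1"
        using tau2 by (simp flip: of_real_mult of_real_add add: power2_eq_square)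
      show "?t * ?t + cnj y * y + ?g * ?g = 1"
        unfolding yy using key1 gr2 by (simp flip: of_real_mult of_real_add add: power2_eq_square)
      show "?t * (y + cnj y) = ?g * ?g"
        unfolding ypy using gr2 by (simp flip: of_real_mult add: power2_eq_square algebra_simps)
      have e1: "(?t - y) * (?t - cnj y) = ?t * ?t - ?t * (y + cnj y) + cnj y * y" by (simp add: algebra_simps)
      have e2: "?t * ?t - ?t * (y + cnj y) + cnj y * y = complex_of_real (tr*tr - tr*(2*x*cos \<gamma>) + x^2)"
        unfolding ypy yy by simp
      have e3: "2 * (?g * ?g) = complex_of_real (2 * gr^2)" by (simp add: power2_eq_square)
      have r: "2 * gr^2 + (tr*tr - tr*(2*x*cos \<gamma>) + x^2) = 1"
        using key1 gr2 by (simp add: power2_eq_square algebra_simps)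
      show "2 * (?g * ?g) + (?t - y) * (?t - cnj y) = 1"
        unfolding e1 e2 e3 by (simp only: of_real_add[symmetric] r of_real_1)
    qed
    have yy2: "y * y = ?t * ?t * (exp (\<i> * complex_of_real \<phi>) - 1)"
    proof -
      have "y * y = complex_of_real (x^2) * (exp (\<i> * complex_of_real \<gamma>) * exp (\<i> * complex_of_real \<gamma>))"
        unfolding y_def by (simp add: power2_eq_square algebra_simps)
      also have "exp (\<i> * complex_of_real \<gamma>) * exp (\<i> * complex_of_real \<gamma>) = exp (\<i> * complex_of_real ((\<phi> + pi)/2))"
      proof -
        have r: "\<gamma> + \<gamma> = (\<phi> + pi)/2" unfolding \<gamma>_def by simp
        have a: "\<i> * complex_of_real \<gamma> + \<i> * complex_of_real \<gamma> = \<i> * complex_of_real ((\<phi> + pi)/2)"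
          by (simp only: distrib_left[symmetric] of_real_add[symmetric] r)
        show ?thesis unfolding mult_exp_exp a ..
      qed
      finally show ?thesis unfolding tf(7) x2 by (simp add: power2_eq_square algebra_simps)
    qed
    have sq: "complex_of_real (sqrt p_opt) = ?t * ?t"
    proof -
      have "sqrt p_opt = 1 / K" unfolding pK using K1 by (simp add: real_sqrt_divide)
      also have "\<dots> = tr^2" using trK K1 by (simp add: field_simps)
      finally show ?thesis by (simp add: power2_eq_square)
    qed
    have pos: "p_opt > 0" unfolding pK using K1 by simp
    have "implements_cphase 7 (Vm ?t ?tau y ?g) \<phi> p_opt"
      unfolding implements_cphase_def
    proof (intro conjI exI[of _ 1])
      show "4 \<le> (7::nat)" by simp
      show "unitary_mat 7 (Vm ?t ?tau y ?g)" by (rule U)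
      show "p_opt > 0" by (rule pos)
      show "cmod 1 = 1" by simp
      show "\<forall>c1 c2 b1 b2. postsel_amp (Vm ?t ?tau y ?g) c1 c2 b1 b2 = 1 * complex_of_real (sqrt p_opt) * cphase_entry \<phi> c1 c2 b1 b2"
        unfolding sq cphase_entry_def using amp_ok[OF yy2] by simp
    qed
    then show ?thesis by blast
  qed
  show ?thesis using ex ub by blast
qed

end
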